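(* For every $n\ge 2$, $\gamma_{\rm i}(P_n^2)\ge 3\lfloor n/8\rfloor$.
   Context: $P_n$ is the path on $n$ vertices and $P_n^2$ its square (same vertex set, two vertices adjacent iff their distance in $P_n$ is $1$ or $2$). Indicated domination game on a graph $G$: two players, Dominator and Staller, alternate. In each round Dominator indicates a vertex $v$ not yet dominated by the vertices previously selected by Staller (a vertex dominates itself and its neighbors), and Staller must select a vertex of the closed neighborhood $N[v]$, adding it to a set $D$. The game ends when $D$ is a dominating set of $G$. Dominator wants to minimize $|D|$ and Staller to maximize it; the size of $D$ under optimal play of both is the indicated domination number $\gamma_{\rm i}(G)$. *)

theory Defs
  imports Main
begin

text \<open>A finite simple graph is given by a vertex set V and a symmetric adjacency
relation E (only pairs within V are relevant).\<close>

definition cnbr :: "'a set \<Rightarrow> ('a \<Rightarrow> 'a \<Rightarrow> bool) \<Rightarrow> 'a \<Rightarrow> 'a set" where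
  "cnbr V E v = {u \<in> V. u = v \<or> E v u}"

definition dominated_by :: "'a set \<Rightarrow> ('a \<Rightarrow> 'a \<Rightarrow> bool) \<Rightarrow> 'a set \<Rightarrow> 'a \<Rightarrow> bool" where
  "dominated_by V E D v \<longleftrightarrow> (\<exists>d\<in>D. v \<in> cnbr V E d)"

definition dominating :: "'a set \<Rightarrow> ('a \<Rightarrow> 'a \<Rightarrow> bool) \<Rightarrow> 'a set \<Rightarrow> bool" where
  "dominating V E D \<longleftrightarrow> (\<forall>v\<in>V. dominated_by V E D v)"

text \<open>dom_wins V E D k: from the position in which Staller has selected the set D,
Dominator has a strategy guaranteeing that the game ends with at most k selected
vertices, whatever Staller does.\<close>

inductive dom_wins :: "'a set \<Rightarrow> ('a \<Rightarrow> 'a \<Rightarrow> bool) \<Rightarrow> 'a set \<Rightarrow> nat \<Rightarrow> bool"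
  for V E where
  finished: "dominating V E D \<Longrightarrow> card D \<le> k \<Longrightarrow> dom_wins V E D k"
| indicate: "\<not> dominating V E D \<Longrightarrow> v \<in> V \<Longrightarrow> \<not> dominated_by V E D v \<Longrightarrow>
     (\<forall>u\<in>cnbr V E v. dom_wins V E (insert u D) k) \<Longrightarrow> dom_wins V E D k"

definition indicated_domination_number :: "'a set \<Rightarrow> ('a \<Rightarrow> 'a \<Rightarrow> bool) \<Rightarrow> nat" where
  "indicated_domination_number V E = (LEAST k. dom_wins V E {} k)"

text \<open>Square of the path P_n on vertices 0..n-1.\<close>
definition path_sq_adj :: "nat \<Rightarrow> nat \<Rightarrow> bool" where
  "path_sq_adj i j \<longleftrightarrow> (i \<noteq> j \<and> (if i \<le> j then j - i else i - j) \<le> 2)"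

end

theory Submission imports Defs begin

definition hh :: "int \<Rightarrow> int \<Rightarrow> int" where "hh b x = (if x \<le> 0 then 0 else (3*x+b) div 8)"
definition pc :: "int \<Rightarrow> bool \<Rightarrow> int \<Rightarrow> int" where "pc b z x = (if z \<and> x \<le> 0 then 0 else (3*x+b) div 8)"

definition cnd :: "int \<Rightarrow> int \<Rightarrow> int \<Rightarrow> bool \<Rightarrow> bool \<Rightarrow> bool \<Rightarrow> bool \<Rightarrow> int \<Rightarrow> int \<Rightarrow> int \<Rightarrow> bool" where
 "cnd bl br bo eL eR zb zc s t d \<longleftrightarrow> (eL \<and> zb \<longrightarrow> 0 \<le> s + d) \<and> (eR \<and> zc \<longrightarrow> d \<le> t) \<and>
    (3*(s+t+1)+bo) div 8 \<le> pc bl zb (s+d-2) + pc br zc (t-2-d) + 1"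

lemma numeric_list:
  "list_all (\<lambda>(bl,br,bo,eL,eR). list_all (\<lambda>zb. list_all (\<lambda>zc. list_all (\<lambda>s. list_all (\<lambda>t.
     list_ex (\<lambda>d. cnd bl br bo eL eR zb zc s t d) [-2..2]) [0..7]) [0..7]) [False,True]) [False,True])
   [(10,10,10,False,False),(4,10,4,True,False),(10,4,4,False,True),(4,4,0,True,True)]"
  by code_simp


definition TY :: "(int \<times> int \<times> int \<times> bool \<times> bool) set" where
  "TY = {(10,10,10,False,False),(4,10,4,True,False),(10,4,4,False,True),(4,4,0,True,True)}"

lemma numeric:
  assumes "(bl,br,bo,eL,eR) \<in> TY"
    and "0 \<le> s" "s < 8" "0 \<le> t" "t < 8"
  shows "\<exists>d. -2 \<le> d \<and> d \<le> 2 \<and> cnd bl br bo eL eR zb zc s t d"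
proof -
  have A: "\<forall>x\<in>set [(10,10,10,False,False),(4,10,4,True,False),(10,4,4,False,True),(4,4,0,True,True)].
     case x of (bl,br,bo,eL,eR) \<Rightarrow> (\<forall>zb\<in>set [False,True]. \<forall>zc\<in>set [False,True]. \<forall>s\<in>set [0..7]. \<forall>t\<in>set [0..7].
     \<exists>d\<in>set [-2..2]. cnd bl br bo eL eR zb zc s t d)"
    using numeric_list by (simp only: list_all_iff list_ex_iff)
  have mem: "(bl,br,bo,eL,eR) \<in> set [(10,10,10,False,False),(4,10,4,True,False),(10,4,4,False,True),(4,4,0,True,True)]"
    using assms(1) unfolding TY_def by (simp only: set_simps)
  have B: "\<forall>zb\<in>set [False,True]. \<forall>zc\<in>set [False,True]. \<forall>s\<in>set [0..7]. \<forall>t\<in>set [0..7].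
     \<exists>d\<in>set [-2..2]. cnd bl br bo eL eR zb zc s t d"
    using bspec[OF A mem] by (simp only: prod.case)
  have "zb \<in> set [False,True]" "zc \<in> set [False,True]" by auto
  moreover have "s \<in> set [0..7]" "t \<in> set [0..7]" using assms(2-5) by auto
  ultimately have "\<exists>d\<in>set [-2..2]. cnd bl br bo eL eR zb zc s t d" using B by blast
  then obtain d where "d \<in> set [-2..2]" "cnd bl br bo eL eR zb zc s t d" by blast
  moreover have "-2 \<le> d \<and> d \<le> 2" using calculation(1) by (simp only: set_upto) simp
  ultimately show ?thesis by blast
qed

lemma hh_split:
  assumes "x = 8*q + m" "0 \<le> q" "-8 < m"
  shows "hh b x = 3*q + pc b (q = 0) m"
proof (cases "q = 0")
  case True then show ?thesis using assms by (simp add: hh_def pc_def)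
next
  case False
  then have "x > 0" using assms by linarith
  have "3*x+b = (3*m+b) + (3*q)*8" using assms(1) by simp
  then have "(3*x+b) div 8 = 3*q + (3*m+b) div 8" by simp
  then show ?thesis using False \<open>x > 0\<close> by (simp add: hh_def pc_def)
qed

lemma gap:
  assumes ty: "(bl,br,bo,eL,eR) \<in> TY" and p: "0 \<le> p" "p < (L::int)"
  shows "\<exists>c. p - 2 \<le> c \<and> c \<le> p + 2 \<and> (eL \<longrightarrow> 0 \<le> c) \<and> (eR \<longrightarrow> c \<le> L - 1) \<and>
     hh bo L \<le> hh bl (c-2) + hh br (L-3-c) + 1"
proof -
  define qb s qc t where "qb = p div 8" "s = p mod 8" "qc = (L-1-p) div 8" "t = (L-1-p) mod 8"
  have e1: "p = 8*qb + s" and e2: "L-1-p = 8*qc+t" unfolding qb_s_qc_t_def by simp_all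
  have r: "0 \<le> s" "s < 8" "0 \<le> t" "t < 8" "0 \<le> qb" "0 \<le> qc" unfolding qb_s_qc_t_def using p by simp_all
  obtain d where d: "-2 \<le> d" "d \<le> 2" and c: "cnd bl br bo eL eR (qb = 0) (qc = 0) s t d"
    using numeric[OF ty r(1-4)] by blast
  have bo0: "bo \<ge> 0" using ty unfolding TY_def by auto
  have h1: "hh bl (p + d - 2) = 3*qb + pc bl (qb = 0) (s+d-2)"
    by (rule hh_split) (use e1 r d in auto)
  have h2: "hh br (L - 3 - (p + d)) = 3*qc + pc br (qc = 0) (t-2-d)"
    by (rule hh_split) (use e2 r d in auto)
  have h3: "hh bo L = 3*(qb+qc) + pc bo (qb+qc = 0) (s+t+1)"
    by (rule hh_split) (use e1 e2 r d in auto)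
  have h4: "pc bo (qb+qc = 0) (s+t+1) = (3*(s+t+1)+bo) div 8"
    using r unfolding pc_def by auto
  show ?thesis
  proof (intro exI conjI)
    show "p - 2 \<le> p + d" "p + d \<le> p + 2" using d by auto
    show "eL \<longrightarrow> 0 \<le> p + d"
    proof
      assume eL
      show "0 \<le> p + d"
      proof (cases "qb = 0")
        case True then show ?thesis using c \<open>eL\<close> e1 unfolding cnd_def by auto
      next
        case False then show ?thesis using r e1 d by auto
      qed
    qed
    show "eR \<longrightarrow> p + d \<le> L - 1"
    proof
      assume eR
      show "p + d \<le> L - 1"
      proof (cases "qc = 0")
        case True then show ?thesis using c \<open>eR\<close> e2 unfolding cnd_def by auto
      next
        case False then show ?thesis using r e2 d by auto
      qed
    qed
    show "hh bo L \<le> hh bl (p + d - 2) + hh br (L - 3 - (p + d)) + 1"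
    proof -
      have c3: "(3*(s+t+1)+bo) div 8 \<le> pc bl (qb = 0) (s+d-2) + pc br (qc = 0) (t-2-d) + 1"
        using c unfolding cnd_def by blast
      define K where "K = (3*(s+t+1)+bo) div 8"
      define P1 where "P1 = pc bl (qb = 0) (s+d-2)"
      define P2 where "P2 = pc br (qc = 0) (t-2-d)"
      have "hh bo L = 3*(qb+qc) + K" using h3 h4 unfolding K_def by simp
      moreover have "K \<le> P1 + P2 + 1" using c3 unfolding K_def P1_def P2_def .
      ultimately show ?thesis unfolding h1 h2 P1_def[symmetric] P2_def[symmetric] by (smt (verit))
    qed
  qed
qed


fun gp :: "nat \<Rightarrow> nat option \<Rightarrow> nat list \<Rightarrow> int" where
  "gp n None [] = hh 0 (int n)"
| "gp n None (y#ys) = hh 4 (int y - 2) + gp n (Some y) ys"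
| "gp n (Some x) [] = hh 4 (int n - 3 - int x)"
| "gp n (Some x) (y#ys) = hh 10 (int y - int x - 5) + gp n (Some y) ys"

lemma TY_DD: "(10,10,10,False,False) \<in> TY" and TY_ED: "(4,10,4,True,False) \<in> TY"
  and TY_DE: "(10,4,4,False,True) \<in> TY" and TY_EE: "(4,4,0,True,True) \<in> TY"
  unfolding TY_def by auto

definition okp :: "nat option \<Rightarrow> nat \<Rightarrow> nat list \<Rightarrow> bool" where
  "okp p v xs = (case p of None \<Rightarrow> True | Some x \<Rightarrow> x + 3 \<le> v \<and> (\<forall>y\<in>set xs. x < y))"

lemma step:
  assumes "sorted_wrt (<) xs" "\<forall>y\<in>set xs. y < n" "okp p v xs" "v < n"
    "\<forall>y\<in>set xs. v + 3 \<le> y \<or> y + 3 \<le> v"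
  shows "\<exists>u. u < n \<and> v \<le> u + 2 \<and> u \<le> v + 2 \<and> gp n p xs \<le> gp n p (insort u xs) + 1"
  using assms
proof (induction xs arbitrary: p)
  case Nil
  show ?case
  proof (cases p)
    case None
    obtain c where c: "int v - 2 \<le> c" "c \<le> int v + 2" "0 \<le> c" "c \<le> int n - 1"
      "hh 0 (int n) \<le> hh 4 (c-2) + hh 4 (int n-3-c) + 1"
      using gap[OF TY_EE, of "int v" "int n"] Nil.prems by auto
    show ?thesis
    proof (intro exI conjI)
      show "nat c < n" "v \<le> nat c + 2" "nat c \<le> v + 2" using c by auto
      show "gp n p [] \<le> gp n p (insort (nat c) []) + 1" using c None by simp
    qed
  next
    case (Some x)
    then have x: "x + 3 \<le> v" using Nil.prems unfolding okp_def by auto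
    obtain c where c: "int v - int x - 3 - 2 \<le> c" "c \<le> int v - int x - 3 + 2" "c \<le> int n - 3 - int x - 1"
      "hh 4 (int n - 3 - int x) \<le> hh 10 (c-2) + hh 4 (int n - 3 - int x -3-c) + 1"
      using gap[OF TY_DE, of "int v - int x - 3" "int n - 3 - int x"] Nil.prems x by auto
    define u where "u = nat (c + int x + 3)"
    have u: "int u = c + int x + 3" using c x unfolding u_def by auto
    show ?thesis
    proof (intro exI conjI)
      show "u < n" "v \<le> u + 2" "u \<le> v + 2" using c u by auto
      have "hh 10 (int u - int x - 5) = hh 10 (c-2)" "hh 4 (int n - 3 - int u) = hh 4 (int n - 3 - int x -3-c)"
        using u by (simp_all add: algebra_simps)
      then show "gp n p [] \<le> gp n p (insort u []) + 1" using c Some by simp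
    qed
  qed
next
  case (Cons y ys)
  have sy: "\<forall>z\<in>set ys. y < z" "sorted_wrt (<) ys" using Cons.prems(1) by auto
  have yn: "y < n" using Cons.prems(2) by auto
  show ?case
  proof (cases "v + 3 \<le> y")
    case True
    show ?thesis
    proof (cases p)
      case None
      obtain c where c: "int v - 2 \<le> c" "c \<le> int v + 2" "0 \<le> c"
        "hh 4 (int y - 2) \<le> hh 4 (c-2) + hh 10 (int y - 2 -3-c) + 1"
        using gap[OF TY_ED, of "int v" "int y - 2"] True by auto
      define u where "u = nat c"
      have u: "int u = c" using c unfolding u_def by auto
      have uy: "u < y" using u c True by auto
      have ins: "insort u (y#ys) = u # y # ys" using uy by simp
      show ?thesis
      proof (intro exI conjI)
        show "u < n" "v \<le> u + 2" "u \<le> v + 2" using c u uy yn by auto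
        have "hh 4 (int u - 2) = hh 4 (c-2)" "hh 10 (int y - int u - 5) = hh 10 (int y - 2 -3-c)"
          using u by (simp_all add: algebra_simps)
        then show "gp n p (y#ys) \<le> gp n p (insort u (y#ys)) + 1" unfolding ins using c None by simp
      qed
    next
      case (Some x)
      then have x: "x + 3 \<le> v" using Cons.prems unfolding okp_def by auto
      obtain c where c: "int v - int x - 3 - 2 \<le> c" "c \<le> int v - int x - 3 + 2"
        "hh 10 (int y - int x - 5) \<le> hh 10 (c-2) + hh 10 (int y - int x - 5 -3-c) + 1"
        using gap[OF TY_DD, of "int v - int x - 3" "int y - int x - 5"] True x by auto
      define u where "u = nat (c + int x + 3)"
      have u: "int u = c + int x + 3" using c x unfolding u_def by auto
      have uy: "u < y" using u c True by auto
      have ins: "insort u (y#ys) = u # y # ys" using uy by simp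
      show ?thesis
      proof (intro exI conjI)
        show "u < n" "v \<le> u + 2" "u \<le> v + 2" using c u uy yn by auto
        have "hh 10 (int u - int x - 5) = hh 10 (c-2)" "hh 10 (int y - int u - 5) = hh 10 (int y - int x - 5 -3-c)"
          using u by (simp_all add: algebra_simps)
        then show "gp n p (y#ys) \<le> gp n p (insort u (y#ys)) + 1" unfolding ins using c Some by simp
      qed
    qed
  next
    case False
    then have yv: "y + 3 \<le> v" using Cons.prems(5) by auto
    have "okp (Some y) v ys" using yv sy unfolding okp_def by auto
    have "\<exists>u. u < n \<and> v \<le> u + 2 \<and> u \<le> v + 2 \<and> gp n (Some y) ys \<le> gp n (Some y) (insort u ys) + 1"
    proof (rule Cons.IH)
      show "sorted_wrt (<) ys" by (rule sy(2))
      show "\<forall>y\<in>set ys. y < n" "v < n" "\<forall>y\<in>set ys. v + 3 \<le> y \<or> y + 3 \<le> v" using Cons.prems(2,4,5) by auto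
    qed fact
    then obtain u where u: "u < n" "v \<le> u + 2" "u \<le> v + 2" "gp n (Some y) ys \<le> gp n (Some y) (insort u ys) + 1"
      by blast
    have ins: "insort u (y#ys) = y # insort u ys" using u yv by auto
    show ?thesis
    proof (intro exI conjI)
      show "u < n" "v \<le> u + 2" "u \<le> v + 2" using u by auto
      show "gp n p (y#ys) \<le> gp n p (insort u (y#ys)) + 1" unfolding ins using u(4)
        by (cases p) auto
    qed
  qed
qed

lemma zero:
  assumes "sorted_wrt (<) xs" "\<forall>y\<in>set xs. y < n"
    "case p of None \<Rightarrow> True | Some x \<Rightarrow> x < n \<and> (\<forall>y\<in>set xs. x < y)"
    "\<forall>v. v < n \<longrightarrow> (case p of None \<Rightarrow> True | Some x \<Rightarrow> x + 3 \<le> v) \<longrightarrow> (\<exists>y\<in>set xs. v \<le> y + 2 \<and> y \<le> v + 2)"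
  shows "gp n p xs = 0"
  using assms
proof (induction xs arbitrary: p)
  case Nil
  then show ?case
  proof (cases p)
    case None
    have "\<not> 0 < n"
    proof
      assume "0 < n" then show False using Nil.prems(4)[rule_format, of 0] None by simp
    qed
    then have "n = 0" by simp
    then show ?thesis using None by (simp add: hh_def)
  next
    case (Some x)
    have "\<not> x + 3 < n"
    proof
      assume "x + 3 < n" then show False using Nil.prems(4)[rule_format, of "x+3"] Some by simp
    qed
    then show ?thesis using Some by (simp add: hh_def)
  qed
next
  case (Cons y ys)
  have sy: "\<forall>z\<in>set ys. y < z" "sorted_wrt (<) ys" using Cons.prems(1) by auto
  have yn: "y < n" using Cons.prems(2) by auto
  have rest: "gp n (Some y) ys = 0"
  proof (rule Cons.IH)
    show "sorted_wrt (<) ys" "\<forall>y\<in>set ys. y < n" using sy Cons.prems by auto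
    show "case Some y of None \<Rightarrow> True | Some x \<Rightarrow> x < n \<and> (\<forall>y\<in>set ys. x < y)" using sy yn by auto
    show "\<forall>v. v < n \<longrightarrow> (case Some y of None \<Rightarrow> True | Some x \<Rightarrow> x + 3 \<le> v) \<longrightarrow> (\<exists>y\<in>set ys. v \<le> y + 2 \<and> y \<le> v + 2)"
    proof (intro allI impI)
      fix v assume v: "v < n" "case Some y of None \<Rightarrow> True | Some x \<Rightarrow> x + 3 \<le> v"
      have "case p of None \<Rightarrow> True | Some x \<Rightarrow> x + 3 \<le> v" using v Cons.prems(3) by (cases p) auto
      then obtain z where "z \<in> set (y#ys)" "v \<le> z + 2" "z \<le> v + 2" using Cons.prems(4)[rule_format, of v] v(1) by blast
      then show "\<exists>y\<in>set ys. v \<le> y + 2 \<and> y \<le> v + 2" using v by auto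
    qed
  qed
  show ?case
  proof (cases p)
    case None
    have "\<not> 3 \<le> y"
    proof
      assume "3 \<le> y"
      have "0 < n" using yn by auto
      then have "\<exists>z\<in>set (y#ys). 0 \<le> z + 2 \<and> z \<le> 0 + 2" using Cons.prems(4)[rule_format, of 0] None by simp
      then obtain z where "z \<in> set (y#ys)" "0 \<le> z + 2" "z \<le> 0 + 2" by blast
      then show False using sy \<open>3 \<le> y\<close> by auto
    qed
    then show ?thesis using None rest by (simp add: hh_def)
  next
    case (Some x)
    have xy: "x < y" using Some Cons.prems(3) by auto
    have "\<not> x + 5 < y"
    proof
      assume a: "x + 5 < y"
      have "x + 3 < n" using a yn by auto
      then have "\<exists>z\<in>set (y#ys). x + 3 \<le> z + 2 \<and> z \<le> x + 3 + 2" using Cons.prems(4)[rule_format, of "x+3"] Some by simp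
      then obtain z where "z \<in> set (y#ys)" "x + 3 \<le> z + 2" "z \<le> x + 3 + 2" by blast
      then show False using sy a by auto
    qed
    then show ?thesis using Some rest by (simp add: hh_def)
  qed
qed


lemma adj_iff: "path_sq_adj a b \<longleftrightarrow> a \<noteq> b \<and> a \<le> b + 2 \<and> b \<le> a + 2"
  unfolding path_sq_adj_def by auto

lemma dom_iff: "v < n \<Longrightarrow> dominated_by {0..<n} path_sq_adj D v \<longleftrightarrow> (\<exists>d\<in>D. v \<le> d + 2 \<and> d \<le> v + 2)"
proof -
  assume vn: "v < n"
  have "\<And>d. v \<in> cnbr {0..<n} path_sq_adj d \<longleftrightarrow> v \<le> d + 2 \<and> d \<le> v + 2"
    unfolding cnbr_def adj_iff using vn by auto
  then show ?thesis unfolding dominated_by_def by simp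
qed

lemma cnbr_iff: "u \<in> cnbr {0..<n} path_sq_adj v \<longleftrightarrow> u < n \<and> u \<le> v + 2 \<and> v \<le> u + 2"
  unfolding cnbr_def adj_iff by auto

lemma main:
  assumes "dom_wins {0..<n} path_sq_adj D k" "D \<subseteq> {0..<n}"
  shows "int (card D) + gp n None (sorted_list_of_set D) \<le> int k"
  using assms
proof (induction rule: dom_wins.induct)
  case (finished D k)
  have fin: "finite D" using finished.prems finite_subset by blast
  have "gp n None (sorted_list_of_set D) = 0"
  proof (rule zero)
    show "sorted_wrt (<) (sorted_list_of_set D)" by (rule strict_sorted_list_of_set)
    show "\<forall>y\<in>set (sorted_list_of_set D). y < n" using fin finished.prems by auto
    show "case None of None \<Rightarrow> True | Some x \<Rightarrow> x < n \<and> (\<forall>y\<in>set (sorted_list_of_set D). x < y)" by simp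
    show "\<forall>v. v < n \<longrightarrow> (case None of None \<Rightarrow> True | Some x \<Rightarrow> x + 3 \<le> v) \<longrightarrow> (\<exists>y\<in>set (sorted_list_of_set D). v \<le> y + 2 \<and> y \<le> v + 2)"
    proof (intro allI impI)
      fix v :: nat assume "v < n"
      then have "dominated_by {0..<n} path_sq_adj D v" using finished.hyps(1) unfolding dominating_def by auto
      then show "\<exists>y\<in>set (sorted_list_of_set D). v \<le> y + 2 \<and> y \<le> v + 2" using dom_iff[OF \<open>v < n\<close>] fin by auto
    qed
  qed
  then show ?case using finished.hyps(2) by simp
next
  case (indicate D v k)
  have fin: "finite D" using indicate.prems finite_subset by blast
  have vn: "v < n" using indicate.hyps(2) by auto
  have nd: "\<forall>d\<in>D. v + 3 \<le> d \<or> d + 3 \<le> v" using indicate.hyps(3) dom_iff[OF vn] by auto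
  obtain u where u: "u < n" "v \<le> u + 2" "u \<le> v + 2"
    "gp n None (sorted_list_of_set D) \<le> gp n None (insort u (sorted_list_of_set D)) + 1"
  proof -
    have "\<exists>u. u < n \<and> v \<le> u + 2 \<and> u \<le> v + 2 \<and> gp n None (sorted_list_of_set D) \<le> gp n None (insort u (sorted_list_of_set D)) + 1"
    proof (rule step)
      show "sorted_wrt (<) (sorted_list_of_set D)" by (rule strict_sorted_list_of_set)
      show "\<forall>y\<in>set (sorted_list_of_set D). y < n" using fin indicate.prems by auto
      show "okp None v (sorted_list_of_set D)" unfolding okp_def by simp
      show "v < n" by (rule vn)
      show "\<forall>y\<in>set (sorted_list_of_set D). v + 3 \<le> y \<or> y + 3 \<le> v" using nd fin by auto
    qed
    then show ?thesis using that by blast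
  qed
  have uD: "u \<notin> D" using nd u by force
  have uc: "u \<in> cnbr {0..<n} path_sq_adj v" using u cnbr_iff by auto
  have "int (card (insert u D)) + gp n None (sorted_list_of_set (insert u D)) \<le> int k"
    using indicate.IH uc indicate.prems u(1) by auto
  moreover have "card (insert u D) = card D + 1" using fin uD by simp
  moreover have "sorted_list_of_set (insert u D) = insort u (sorted_list_of_set D)"
    using fin uD by (rule sorted_list_of_set_insert)
  ultimately show ?case using u(4) by simp
qed

lemma exist:
  assumes "D \<subseteq> {0..<n}"
  shows "dom_wins {0..<n} path_sq_adj D n"
  using assms
proof (induction "n - card D" arbitrary: D rule: less_induct)
  case less
  have fin: "finite D" using less.prems finite_subset by blast
  have cD: "card D \<le> n" using card_mono[OF _ less.prems] by simp
  show ?case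
  proof (cases "dominating {0..<n} path_sq_adj D")
    case True
    then show ?thesis using cD by (rule dom_wins.finished)
  next
    case False
    then obtain v where v: "v \<in> {0..<n}" "\<not> dominated_by {0..<n} path_sq_adj D v"
      unfolding dominating_def by auto
    have vn: "v < n" using v by auto
    show ?thesis
    proof (rule dom_wins.indicate[OF False v])
      show "\<forall>u\<in>cnbr {0..<n} path_sq_adj v. dom_wins {0..<n} path_sq_adj (insert u D) n"
      proof
        fix u assume "u \<in> cnbr {0..<n} path_sq_adj v"
        then have u: "u < n" "u \<le> v + 2" "v \<le> u + 2" using cnbr_iff by auto
        have uD: "u \<notin> D" using v(2) dom_iff[OF vn] u by auto
        have sub: "insert u D \<subseteq> {0..<n}" using u less.prems by auto
        have "card (insert u D) = card D + 1" using fin uD by simp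
        moreover have "card (insert u D) \<le> n" using card_mono[OF _ sub] by simp
        ultimately have "n - card (insert u D) < n - card D" by simp
        then show "dom_wins {0..<n} path_sq_adj (insert u D) n" using less.hyps sub by blast
      qed
    qed
  qed
qed

theorem corollary6p2:
  fixes n :: nat
  assumes "n \<ge> 2"
  shows "indicated_domination_number {0..<n} path_sq_adj \<ge> 3 * (n div 8)"
proof -
  let ?P = "\<lambda>k. dom_wins {0..<n} path_sq_adj {} k"
  have ex: "?P n" using exist[of "{}" n] by simp
  define m where "m = (LEAST k. ?P k)"
  have Pm: "?P m" unfolding m_def using ex by (rule LeastI)
  have "int (card ({}::nat set)) + gp n None (sorted_list_of_set {}) \<le> int m"
    using main[OF Pm] by simp
  then have "hh 0 (int n) \<le> int m" by simp
  moreover have "hh 0 (int n) = (3 * int n) div 8" using assms unfolding hh_def by simp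
  moreover have "3 * int (n div 8) \<le> (3 * int n) div 8"
  proof -
    have e: "3*n = (3*(n mod 8)) + (3*(n div 8))*8" using div_mult_mod_eq[of n 8] by linarith
    have "(3*n) div 8 = ((3*(n mod 8)) + (3*(n div 8))*8) div 8" using e by (rule arg_cong)
    also have "\<dots> = 3*(n div 8) + (3*(n mod 8)) div 8" by (rule div_mult_self1) simp
    finally have "(3*n) div 8 = 3*(n div 8) + (3*(n mod 8)) div 8" .
    then have "3*(n div 8) \<le> (3*n) div 8" by simp
    moreover have "int ((3*n) div 8) = (3 * int n) div 8" by (simp add: zdiv_int)
    ultimately show ?thesis by linarith
  qed
  ultimately have "int (3 * (n div 8)) \<le> int m" by simp
  then show ?thesis unfolding indicated_domination_number_def m_def by simp
qed

end
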